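(* Let $p$ be a state and let $r\in p^{TP}=\{Tp:T\in TP(d)\}$. Then $r$ lies on the boundary of $p^{TP}$, regarded as a subset of the affine hyperplane $\{x\in\mathbb{R}^d:\sum_i x_i=1\}$, if and only if at least one elbow of $\beta(r)$ lies on $\beta(p)$.
   Context: Fix $d\ge 2$, $\beta\in(0,\infty)$ and pairwise distinct reals $E_0=0,E_1,\dots,E_{d-1}$. Put $q_{m,n}=e^{-\beta(E_m-E_n)}$, $Z=\sum_j q_{j,0}$, $g_i=q_{i,0}/Z$. A state is a probability vector in $\mathbb{R}^d$. $TP(d)$ is the set of $d\times d$ real matrices with non-negative entries, columns summing to $1$, and $Tg=g$. For a state $p$ choose a permutation $\pi$ of $\{0,\dots,d-1\}$ with $p_{\pi(0)}/g_{\pi(0)}\ge\dots\ge p_{\pi(d-1)}/g_{\pi(d-1)}$; let $x_k=\sum_{i\le k}g_{\pi(i)}$, $y_k=\sum_{i\le k}p_{\pi(i)}$. The thermomajorization curve $\beta(p)$ is the graph of the concave piecewise-linear function on $[0,1]$ through $(0,0),(x_0,y_0),\dots,(x_{d-1},y_{d-1})=(1,1)$. The elbows of $\beta(p)$ are the points $(x_k,y_k)$ for $k=0,\dots,d-2$. A point $(x,y)$ lies on $\beta(p)$ if $y$ equals the value of that function at $x$. *)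

theory Defs
  imports "HOL-Analysis.Analysis"
begin

(* Vectors in R^d are encoded as functions nat => real, with coordinates 0..d-1;
   matrices as nat => nat => real (entries T i j, i,j < d). *)

definition qf :: "real \<Rightarrow> (nat \<Rightarrow> real) \<Rightarrow> nat \<Rightarrow> nat \<Rightarrow> real" where
  "qf \<beta> E m n = exp (- \<beta> * (E m - E n))"

definition Zf :: "nat \<Rightarrow> real \<Rightarrow> (nat \<Rightarrow> real) \<Rightarrow> real" where
  "Zf d \<beta> E = (\<Sum>j<d. qf \<beta> E j 0)"

definition gibbs :: "nat \<Rightarrow> real \<Rightarrow> (nat \<Rightarrow> real) \<Rightarrow> nat \<Rightarrow> real" where
  "gibbs d \<beta> E i = qf \<beta> E i 0 / Zf d \<beta> E"

definition is_state :: "nat \<Rightarrow> (nat \<Rightarrow> real) \<Rightarrow> bool" where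
  "is_state d p \<longleftrightarrow> (\<forall>i<d. 0 \<le> p i) \<and> (\<Sum>i<d. p i) = 1 \<and> (\<forall>i\<ge>d. p i = 0)"

definition TP :: "nat \<Rightarrow> (nat \<Rightarrow> real) \<Rightarrow> (nat \<Rightarrow> nat \<Rightarrow> real) set" where
  "TP d g = {T. (\<forall>i<d. \<forall>j<d. 0 \<le> T i j) \<and> (\<forall>j<d. (\<Sum>i<d. T i j) = 1)
                 \<and> (\<forall>i<d. (\<Sum>j<d. T i j * g j) = g i)}"

definition mat_app :: "nat \<Rightarrow> (nat \<Rightarrow> nat \<Rightarrow> real) \<Rightarrow> (nat \<Rightarrow> real) \<Rightarrow> nat \<Rightarrow> real" where
  "mat_app d T p = (\<lambda>i. if i < d then (\<Sum>j<d. T i j * p j) else 0)"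

definition TP_orbit :: "nat \<Rightarrow> (nat \<Rightarrow> real) \<Rightarrow> (nat \<Rightarrow> real) \<Rightarrow> (nat \<Rightarrow> real) set" where
  "TP_orbit d g p = {mat_app d T p | T. T \<in> TP d g}"

definition hyperplane1 :: "nat \<Rightarrow> (nat \<Rightarrow> real) set" where
  "hyperplane1 d = {x. (\<forall>i\<ge>d. x i = 0) \<and> (\<Sum>i<d. x i) = 1}"

definition thermo_order :: "nat \<Rightarrow> (nat \<Rightarrow> real) \<Rightarrow> (nat \<Rightarrow> real) \<Rightarrow> (nat \<Rightarrow> nat) \<Rightarrow> bool" where
  "thermo_order d g p \<pi> \<longleftrightarrow> \<pi> permutes {..<d} \<and>
     (\<forall>i j. i \<le> j \<and> j < d \<longrightarrow> p (\<pi> j) / g (\<pi> j) \<le> p (\<pi> i) / g (\<pi> i))"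

(* cumulative sums: cum f pi k = sum_{i<k} f(pi i); so (x_k,y_k) = (cum g pi (k+1), cum p pi (k+1)),
   and cum _ _ 0 = 0 gives the origin *)
definition cum :: "(nat \<Rightarrow> real) \<Rightarrow> (nat \<Rightarrow> nat) \<Rightarrow> nat \<Rightarrow> real" where
  "cum f \<pi> k = (\<Sum>i<k. f (\<pi> i))"

definition on_curve :: "nat \<Rightarrow> (nat \<Rightarrow> real) \<Rightarrow> (nat \<Rightarrow> real) \<Rightarrow> (nat \<Rightarrow> nat) \<Rightarrow> real \<Rightarrow> real \<Rightarrow> bool" where
  "on_curve d g p \<pi> x y \<longleftrightarrow> (\<exists>k<d. cum g \<pi> k \<le> x \<and> x \<le> cum g \<pi> (Suc k) \<and>
      y = cum p \<pi> k + (cum p \<pi> (Suc k) - cum p \<pi> k) / (cum g \<pi> (Suc k) - cum g \<pi> k) * (x - cum g \<pi> k))"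

(* some elbow (x_k,y_k), k = 0..d-2, of beta(r) (w.r.t. ordering pr) lies on beta(p) (w.r.t. ordering pp) *)
definition elbow_on_curve :: "nat \<Rightarrow> (nat \<Rightarrow> real) \<Rightarrow> (nat \<Rightarrow> real) \<Rightarrow> (nat \<Rightarrow> nat) \<Rightarrow> (nat \<Rightarrow> real) \<Rightarrow> (nat \<Rightarrow> nat) \<Rightarrow> bool" where
  "elbow_on_curve d g r \<pi>r p \<pi>p \<longleftrightarrow>
     (\<exists>k. k + 2 \<le> d \<and> on_curve d g p \<pi>p (cum g \<pi>r (Suc k)) (cum r \<pi>r (Suc k)))"

end

theory Submission
  imports Defs
begin


definition tau :: "(nat \<Rightarrow> real) \<Rightarrow> real \<Rightarrow> nat \<Rightarrow> real" where
  "tau w t j = min (w j) (max 0 (t - (\<Sum>i<j. w i)))"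

lemma cum_mono:
  assumes "\<forall>j. 0 \<le> w j" "i \<le> j"
  shows "(\<Sum>l<i. w l) \<le> (\<Sum>l<j. (w::nat\<Rightarrow>real) l)"
  using assms by (intro sum_mono2) auto

lemma cum_nonneg: "\<forall>j. 0 \<le> w j \<Longrightarrow> 0 \<le> (\<Sum>l<i. (w::nat\<Rightarrow>real) l)"
  by (simp add: sum_nonneg)

lemma tau_sum:
  assumes "\<forall>j. 0 \<le> w j"
  shows "(\<Sum>j<n. tau w t j) = min (\<Sum>i<n. w i) (max 0 t)"
proof (induction n)
  case 0 then show ?case by simp
next
  case (Suc n)
  have c: "0 \<le> (\<Sum>i<n. w i)" using cum_nonneg[OF assms] .
  have wn: "0 \<le> w n" using assms by auto
  show ?case using Suc c wn by (simp add: tau_def min_def max_def)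
qed

lemma tau_bounds:
  assumes "\<forall>j. 0 \<le> w j"
  shows "0 \<le> tau w t j" "tau w t j \<le> w j"
  using assms by (auto simp: tau_def)

lemma tau_mono:
  assumes "t \<le> t'"
  shows "tau w t j \<le> tau w t' j"
  using assms by (auto simp: tau_def min_def max_def)

lemma tau_zero:
  assumes "\<forall>j. 0 \<le> w j"
  shows "tau w 0 j = 0"
  using assms cum_nonneg[OF assms, of j] by (simp add: tau_def)

lemma tau_full:
  assumes "\<forall>j. 0 \<le> w j" "j < n"
  shows "tau w (\<Sum>i<n. w i) j = w j"
proof -
  have "(\<Sum>i<Suc j. w i) \<le> (\<Sum>i<n. w i)" using cum_mono[OF assms(1), of "Suc j" n] assms(2) by auto
  then show ?thesis using assms(1) by (auto simp: tau_def)
qed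

lemma tau_opt:
  assumes w: "\<forall>j. 0 \<le> w j"
    and srt: "\<forall>i j. i \<le> j \<and> j < n \<longrightarrow> \<rho> j \<le> \<rho> i"
  shows "\<exists>c. (\<Sum>j<n. \<rho> j * tau w t j) = c * (\<Sum>j<n. tau w t j) + (\<Sum>j<n. w j * max 0 (\<rho> j - c))"
proof (cases "n = 0")
  case True then show ?thesis by simp
next
  case False
  define K where "K = {j. j < n \<and> (\<Sum>i<j. w i) < t}"
  define k where "k = (if K = {} then 0 else Max K)"
  have kn: "k < n" using False by (auto simp: k_def K_def)
  have after: "tau w t j = 0" if "k < j" "j < n" for j
  proof -
    have "j \<notin> K"
    proof
      assume "j \<in> K"
      then have "K \<noteq> {}" by auto
      then have "j \<le> Max K" using \<open>j \<in> K\<close> by (simp add: K_def)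
      then show False using that \<open>K \<noteq> {}\<close> by (simp add: k_def)
    qed
    then have "t \<le> (\<Sum>i<j. w i)" using that by (auto simp: K_def)
    then show ?thesis using w by (simp add: tau_def)
  qed
  have before: "tau w t j = w j" if "j < k" for j
  proof -
    have "K \<noteq> {}" using that by (auto simp: k_def split: if_splits)
    then have "k \<in> K" unfolding k_def using Max_in[of K] by (auto simp: K_def)
    then have "(\<Sum>i<k. w i) < t" by (auto simp: K_def)
    moreover have "(\<Sum>i<Suc j. w i) \<le> (\<Sum>i<k. w i)" using cum_mono[OF w, of "Suc j" k] that by auto
    ultimately show ?thesis using w by (auto simp: tau_def)
  qed
  have "\<rho> j * tau w t j = \<rho> k * tau w t j + w j * max 0 (\<rho> j - \<rho> k)" if "j < n" for j
  proof (cases "j < k")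
    case True
    then have "\<rho> k \<le> \<rho> j" using srt kn by auto
    then show ?thesis using before[OF True] by (simp add: algebra_simps)
  next
    case False
    show ?thesis
    proof (cases "j = k")
      case True then show ?thesis by simp
    next
      case False
      then have "k < j" using \<open>\<not> j < k\<close> by auto
      then have "\<rho> j \<le> \<rho> k" using srt that by auto
      then show ?thesis using after[OF \<open>k < j\<close> that] by simp
    qed
  qed
  then have "(\<Sum>j<n. \<rho> j * tau w t j) = (\<Sum>j<n. \<rho> k * tau w t j + w j * max 0 (\<rho> j - \<rho> k))"
    by (intro sum.cong) auto
  also have "\<dots> = \<rho> k * (\<Sum>j<n. tau w t j) + (\<Sum>j<n. w j * max 0 (\<rho> j - \<rho> k))"
    by (simp add: sum.distrib sum_distrib_left)
  finally show ?thesis by blast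
qed



lemma window_AP:
  fixes u g0 :: real and w \<rho> :: "nat \<Rightarrow> real"
  assumes w: "\<forall>j. 0 \<le> w j"
    and srt: "\<forall>i j. i \<le> j \<and> j < n \<longrightarrow> \<rho> j \<le> \<rho> i"
  defines "nu \<equiv> (\<lambda>j. tau w (u + g0) j - tau w u j)"
  shows "\<exists>H L. (\<forall>j<n. 0 < nu j \<longrightarrow> L \<le> \<rho> j \<and> \<rho> j \<le> H) \<and>
               (\<forall>j<n. nu j < w j \<longrightarrow> H \<le> \<rho> j \<or> \<rho> j \<le> L)"
proof (cases "{j. j < n \<and> 0 < nu j} = {}")
  case True
  then show ?thesis by (intro exI[of _ 0]) auto
next
  case False
  define P where "P = {j. j < n \<and> 0 < nu j}"
  have fP: "finite P" and neP: "P \<noteq> {}" using False by (auto simp: P_def)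
  define a where "a = Min P"
  define b where "b = Max P"
  have aP: "a \<in> P" using Min_in[OF fP neP] by (simp add: a_def)
  have bP: "b \<in> P" using Max_in[OF fP neP] by (simp add: b_def)
  have an: "a < n" and bn: "b < n" using aP bP by (auto simp: P_def)
  have amin: "a \<le> j" if "j \<in> P" for j using Min_le[OF fP that] by (simp add: a_def)
  have bmax: "j \<le> b" if "j \<in> P" for j using Max_ge[OF fP that] by (simp add: b_def)
  have part1: "\<forall>j<n. 0 < nu j \<longrightarrow> \<rho> b \<le> \<rho> j \<and> \<rho> j \<le> \<rho> a"
  proof (intro allI impI)
    fix j assume "j < n" "0 < nu j"
    then have "j \<in> P" by (simp add: P_def)
    then show "\<rho> b \<le> \<rho> j \<and> \<rho> j \<le> \<rho> a" using amin bmax srt bn \<open>j < n\<close> by auto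
  qed
  have part2: "\<forall>j<n. nu j < w j \<longrightarrow> \<rho> a \<le> \<rho> j \<or> \<rho> j \<le> \<rho> b"
  proof (intro allI impI)
    fix j assume jn: "j < n" and lt: "nu j < w j"
    show "\<rho> a \<le> \<rho> j \<or> \<rho> j \<le> \<rho> b"
    proof (rule ccontr)
      assume "\<not> (\<rho> a \<le> \<rho> j \<or> \<rho> j \<le> \<rho> b)"
      then have r1: "\<rho> j < \<rho> a" and r2: "\<rho> b < \<rho> j" by auto
      have "a < j"
      proof (rule ccontr)
        assume "\<not> a < j" then have "j \<le> a" by simp
        then have "\<rho> a \<le> \<rho> j" using srt an by auto
        then show False using r1 by simp
      qed
      have "j < b"
      proof (rule ccontr)
        assume "\<not> j < b" then have "b \<le> j" by simp
        then have "\<rho> j \<le> \<rho> b" using srt jn by auto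
        then show False using r2 by simp
      qed
      have nua: "0 < nu a" using aP by (simp add: P_def)
      have "tau w u a < w a" using nua tau_bounds(2)[OF w, of "u+g0" a] by (simp add: nu_def)
      then have "u - (\<Sum>i<a. w i) < w a" by (auto simp: tau_def min_def max_def split: if_splits)
      moreover have "(\<Sum>i<Suc a. w i) \<le> (\<Sum>i<j. w i)" using cum_mono[OF w, of "Suc a" j] \<open>a < j\<close> by simp
      ultimately have "u \<le> (\<Sum>i<j. w i)" by simp
      then have t1: "tau w u j = 0" using w by (simp add: tau_def)
      have nub: "0 < nu b" using bP by (simp add: P_def)
      have "0 < tau w (u+g0) b" using nub tau_bounds(1)[OF w, of u b] by (simp add: nu_def)
      then have "(\<Sum>i<b. w i) < u + g0" by (auto simp: tau_def min_def max_def split: if_splits)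
      moreover have "(\<Sum>i<Suc j. w i) \<le> (\<Sum>i<b. w i)" using cum_mono[OF w, of "Suc j" b] \<open>j < b\<close> by simp
      ultimately have "w j \<le> u + g0 - (\<Sum>i<j. w i)" by simp
      then have t2: "tau w (u+g0) j = w j" using w by (simp add: tau_def)
      show False using lt t1 t2 by (simp add: nu_def)
    qed
  qed
  show ?thesis using part1 part2 by blast
qed

lemma verify_rest:
  fixes w nu \<rho> :: "nat \<Rightarrow> real" and A :: "nat set"
  assumes fA: "finite A"
    and nu0: "\<forall>j\<in>A. 0 \<le> nu j" and nuw: "\<forall>j\<in>A. nu j \<le> w j"
    and g0: "(\<Sum>j\<in>A. nu j) = g0" and s0: "(\<Sum>j\<in>A. nu j * \<rho> j) = s0"
    and AP1: "\<forall>j\<in>A. 0 < nu j \<longrightarrow> L \<le> \<rho> j \<and> \<rho> j \<le> H"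
    and AP2: "\<forall>j\<in>A. nu j < w j \<longrightarrow> H \<le> \<rho> j \<or> \<rho> j \<le> L"
    and C1: "\<forall>c. s \<le> c * G + (\<Sum>j\<in>A. w j * max 0 (\<rho> j - c))"
    and C2: "\<forall>c. s + s0 \<le> c * (G + g0) + (\<Sum>j\<in>A. w j * max 0 (\<rho> j - c))"
  shows "s \<le> c * G + (\<Sum>j\<in>A. (w j - nu j) * max 0 (\<rho> j - c))"
proof -
  define B where "B = (\<lambda>c. c * G + (\<Sum>j\<in>A. (w j - nu j) * max 0 (\<rho> j - c)) - s)"
  have split: "(\<Sum>j\<in>A. (w j - nu j) * max 0 (\<rho> j - c)) =
      (\<Sum>j\<in>A. w j * max 0 (\<rho> j - c)) - (\<Sum>j\<in>A. nu j * max 0 (\<rho> j - c))" for c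
    by (simp add: sum_subtractf algebra_simps)
  have hi: "0 \<le> B c" if "H \<le> c" for c
  proof -
    have "(\<Sum>j\<in>A. nu j * max 0 (\<rho> j - c)) = 0"
    proof (intro sum.neutral ballI)
      fix j assume "j \<in> A"
      show "nu j * max 0 (\<rho> j - c) = 0"
      proof (cases "0 < nu j")
        case True then have "\<rho> j \<le> c" using AP1 \<open>j \<in> A\<close> that by force
        then show ?thesis by simp
      next
        case False then have "nu j = 0" using nu0 \<open>j \<in> A\<close> by force
        then show ?thesis by simp
      qed
    qed
    then show ?thesis using C1 split[of c] by (simp add: B_def)
  qed
  have lo: "0 \<le> B c" if "c \<le> L" for c
  proof -
    have "(\<Sum>j\<in>A. nu j * max 0 (\<rho> j - c)) = (\<Sum>j\<in>A. nu j * \<rho> j - c * nu j)"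
    proof (intro sum.cong refl)
      fix j assume "j \<in> A"
      show "nu j * max 0 (\<rho> j - c) = nu j * \<rho> j - c * nu j"
      proof (cases "0 < nu j")
        case True then have "c \<le> \<rho> j" using AP1 \<open>j \<in> A\<close> that by force
        then show ?thesis by (simp add: algebra_simps)
      next
        case False then have "nu j = 0" using nu0 \<open>j \<in> A\<close> by force
        then show ?thesis by simp
      qed
    qed
    also have "\<dots> = s0 - c * g0" using s0 g0 by (simp add: sum_subtractf sum_distrib_left[symmetric])
    finally have "(\<Sum>j\<in>A. nu j * max 0 (\<rho> j - c)) = s0 - c * g0" .
    moreover have "s + s0 \<le> c * (G + g0) + (\<Sum>j\<in>A. w j * max 0 (\<rho> j - c))" using C2 by blast
    ultimately show ?thesis unfolding B_def split[of c] by (simp add: algebra_simps)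
  qed
  show ?thesis
  proof (cases "H \<le> c \<or> c \<le> L")
    case True then show ?thesis using hi lo by (auto simp: B_def)
  next
    case False
    then have cL: "L < c" and cH: "c < H" by auto
    define P where "P = {j\<in>A. H \<le> \<rho> j}"
    have lin: "(\<Sum>j\<in>A. (w j - nu j) * max 0 (\<rho> j - x)) = (\<Sum>j\<in>P. (w j - nu j) * (\<rho> j - x))"
      if "L \<le> x" "x \<le> H" for x
    proof -
      have "(\<Sum>j\<in>A. (w j - nu j) * max 0 (\<rho> j - x)) = (\<Sum>j\<in>A. if j \<in> P then (w j - nu j) * (\<rho> j - x) else 0)"
      proof (intro sum.cong refl)
        fix j assume jA: "j \<in> A"
        show "(w j - nu j) * max 0 (\<rho> j - x) = (if j \<in> P then (w j - nu j) * (\<rho> j - x) else 0)"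
        proof (cases "j \<in> P")
          case True then have "x \<le> \<rho> j" using that by (auto simp: P_def)
          then show ?thesis using True by simp
        next
          case False
          then have "\<rho> j < H" using jA by (auto simp: P_def)
          show ?thesis
          proof (cases "nu j < w j")
            case True then have "\<rho> j \<le> L" using AP2 jA \<open>\<rho> j < H\<close> by force
            then show ?thesis using False that by simp
          next
            case False
            then have "nu j = w j" using nuw jA by force
            then show ?thesis using \<open>j \<notin> P\<close> by simp
          qed
        qed
      qed
      also have "\<dots> = (\<Sum>j\<in>P. (w j - nu j) * (\<rho> j - x))"
        using fA by (simp add: sum.If_cases P_def Int_def)
      finally show ?thesis .
    qed
    have lin2: "B x = x * (G - (\<Sum>j\<in>P. (w j - nu j))) + ((\<Sum>j\<in>P. (w j - nu j) * \<rho> j) - s)"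
      if "L \<le> x" "x \<le> H" for x
    proof -
      have "(\<Sum>j\<in>P. (w j - nu j) * (\<rho> j - x)) = (\<Sum>j\<in>P. (w j - nu j) * \<rho> j) - x * (\<Sum>j\<in>P. (w j - nu j))"
        by (simp add: sum_distrib_left sum_subtractf[symmetric] algebra_simps)
      then show ?thesis unfolding B_def lin[OF that] by (simp add: algebra_simps)
    qed
    have bL: "0 \<le> B L" and bH: "0 \<le> B H" using hi lo by auto
    have LH: "L \<le> H" using cL cH by simp
    have e1: "0 \<le> L * (G - (\<Sum>j\<in>P. (w j - nu j))) + ((\<Sum>j\<in>P. (w j - nu j) * \<rho> j) - s)"
      using bL lin2[of L] LH by simp
    have e2: "0 \<le> H * (G - (\<Sum>j\<in>P. (w j - nu j))) + ((\<Sum>j\<in>P. (w j - nu j) * \<rho> j) - s)"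
      using bH lin2[of H] LH by simp
    have "0 \<le> B c"
    proof (cases "0 \<le> G - (\<Sum>j\<in>P. (w j - nu j))")
      case True
      then have "L * (G - (\<Sum>j\<in>P. (w j - nu j))) \<le> c * (G - (\<Sum>j\<in>P. (w j - nu j)))"
        using cL by (intro mult_right_mono) auto
      then show ?thesis using e1 lin2[of c] cL cH by simp
    next
      case False
      then have "H * (G - (\<Sum>j\<in>P. (w j - nu j))) \<le> c * (G - (\<Sum>j\<in>P. (w j - nu j)))"
        using cH by (intro mult_right_mono_neg) auto
      then show ?thesis using e2 lin2[of c] cL cH by simp
    qed
    then show ?thesis by (simp add: B_def)
  qed
qed



lemma transport:
  fixes \<rho> :: "nat \<Rightarrow> real" and g s :: "'i \<Rightarrow> real" and I :: "'i set"
  assumes fI: "finite I" and srt: "\<forall>i j. i \<le> j \<and> j < n \<longrightarrow> \<rho> j \<le> \<rho> i"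
    and gpos: "\<forall>i\<in>I. 0 \<le> g i"
  shows "\<forall>w. (\<forall>j. 0 \<le> w j) \<and> (\<Sum>j<n. w j) = (\<Sum>i\<in>I. g i) \<and> (\<Sum>j<n. w j * \<rho> j) = (\<Sum>i\<in>I. s i)
     \<and> (\<forall>S\<subseteq>I. \<forall>c. (\<Sum>i\<in>S. s i) \<le> c * (\<Sum>i\<in>S. g i) + (\<Sum>j<n. w j * max 0 (\<rho> j - c)))
     \<longrightarrow> (\<exists>M. (\<forall>i\<in>I. \<forall>j<n. 0 \<le> M i j) \<and> (\<forall>i\<in>I. (\<Sum>j<n. M i j) = g i)
           \<and> (\<forall>j<n. (\<Sum>i\<in>I. M i j) = w j) \<and> (\<forall>i\<in>I. (\<Sum>j<n. M i j * \<rho> j) = s i))"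
  using fI gpos
proof (induction I rule: finite_induct)
  case empty
  show ?case
  proof (intro allI impI)
    fix w :: "nat \<Rightarrow> real"
    assume H: "(\<forall>j. 0 \<le> w j) \<and> (\<Sum>j<n. w j) = (\<Sum>i\<in>{}. g i) \<and> (\<Sum>j<n. w j * \<rho> j) = (\<Sum>i\<in>{}. s i)
     \<and> (\<forall>S\<subseteq>{}. \<forall>c. (\<Sum>i\<in>S. s i) \<le> c * (\<Sum>i\<in>S. g i) + (\<Sum>j<n. w j * max 0 (\<rho> j - c)))"
    then have "\<forall>j\<in>{..<n}. w j = 0" using sum_nonneg_eq_0_iff[of "{..<n}" w] by auto
    then show "\<exists>M. (\<forall>i\<in>{}. \<forall>j<n. 0 \<le> M i j) \<and> (\<forall>i\<in>{}. (\<Sum>j<n. M i j) = g i)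
           \<and> (\<forall>j<n. (\<Sum>i\<in>{}. M i j) = w j) \<and> (\<forall>i\<in>{}. (\<Sum>j<n. M i j * \<rho> j) = s i)"
      by auto
  qed
next
  case (insert i0 I)
  show ?case
  proof (intro allI impI)
    fix w :: "nat \<Rightarrow> real"
    assume H: "(\<forall>j. 0 \<le> w j) \<and> (\<Sum>j<n. w j) = (\<Sum>i\<in>insert i0 I. g i) \<and> (\<Sum>j<n. w j * \<rho> j) = (\<Sum>i\<in>insert i0 I. s i)
     \<and> (\<forall>S\<subseteq>insert i0 I. \<forall>c. (\<Sum>i\<in>S. s i) \<le> c * (\<Sum>i\<in>S. g i) + (\<Sum>j<n. w j * max 0 (\<rho> j - c)))"
    have w0: "\<forall>j. 0 \<le> w j" using H by blast
    define g0 where "g0 = g i0"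
    define s0 where "s0 = s i0"
    define GI where "GI = (\<Sum>i\<in>I. g i)"
    have g0nn: "0 \<le> g0" using insert.prems by (simp add: g0_def)
    have GInn: "0 \<le> GI" using insert.prems by (simp add: GI_def sum_nonneg)
    have W: "(\<Sum>j<n. w j) = g0 + GI" using H insert.hyps by (simp add: g0_def GI_def)
    have Ms: "(\<Sum>j<n. w j * \<rho> j) = s0 + (\<Sum>i\<in>I. s i)" using H insert.hyps by (simp add: s0_def)
    have C: "\<And>S c. S \<subseteq> insert i0 I \<Longrightarrow> (\<Sum>i\<in>S. s i) \<le> c * (\<Sum>i\<in>S. g i) + (\<Sum>j<n. w j * max 0 (\<rho> j - c))"
      using H by blast
    define f where "f = (\<lambda>u. \<Sum>j<n. \<rho> j * (tau w (u + g0) j - tau w u j))"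
    have tsum: "(\<Sum>j<n. tau w t j) = t" if "0 \<le> t" "t \<le> g0 + GI" for t
      using tau_sum[OF w0, where n=n and t=t] W that by simp
    have f0: "s0 \<le> f 0"
    proof -
      obtain c where c: "(\<Sum>j<n. \<rho> j * tau w g0 j) = c * (\<Sum>j<n. tau w g0 j) + (\<Sum>j<n. w j * max 0 (\<rho> j - c))"
        using tau_opt[OF w0 srt] by blast
      have "s0 \<le> c * g0 + (\<Sum>j<n. w j * max 0 (\<rho> j - c))"
        using C[of "{i0}" c] by (simp add: s0_def g0_def)
      also have "\<dots> = (\<Sum>j<n. \<rho> j * tau w g0 j)" using c tsum[of g0] g0nn GInn by simp
      finally show ?thesis by (simp add: f_def tau_zero[OF w0])
    qed
    have f1: "f GI \<le> s0"
    proof -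
      obtain c where c: "(\<Sum>j<n. \<rho> j * tau w GI j) = c * (\<Sum>j<n. tau w GI j) + (\<Sum>j<n. w j * max 0 (\<rho> j - c))"
        using tau_opt[OF w0 srt] by blast
      have "(\<Sum>i\<in>I. s i) \<le> c * GI + (\<Sum>j<n. w j * max 0 (\<rho> j - c))"
        using C[of I c] by (auto simp: GI_def)
      also have "\<dots> = (\<Sum>j<n. \<rho> j * tau w GI j)" using c tsum[of GI] g0nn GInn by simp
      finally have a: "(\<Sum>i\<in>I. s i) \<le> (\<Sum>j<n. \<rho> j * tau w GI j)" .
      have "(\<Sum>j<n. \<rho> j * tau w (GI + g0) j) = (\<Sum>j<n. w j * \<rho> j)"
      proof (intro sum.cong refl)
        fix j assume "j \<in> {..<n}"
        then show "\<rho> j * tau w (GI + g0) j = w j * \<rho> j"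
          using tau_full[OF w0, of j n] W by (simp add: add.commute)
      qed
      then have "f GI = (\<Sum>j<n. w j * \<rho> j) - (\<Sum>j<n. \<rho> j * tau w GI j)"
        by (simp add: f_def sum_subtractf algebra_simps)
      then show ?thesis using a Ms by simp
    qed
    have cont: "\<forall>x. 0 \<le> x \<and> x \<le> GI \<longrightarrow> isCont f x"
      unfolding f_def tau_def by (intro allI impI continuous_intros)
    obtain u where u: "0 \<le> u" "u \<le> GI" "f u = s0"
      using IVT2[of f GI s0 0, OF f1 f0 GInn cont] by blast
    define nu where "nu = (\<lambda>j. tau w (u + g0) j - tau w u j)"
    have nu0: "\<forall>j. 0 \<le> nu j" using tau_mono[of u "u+g0"] g0nn by (simp add: nu_def)
    have nuw: "\<forall>j. nu j \<le> w j"
    proof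
      fix j show "nu j \<le> w j" using tau_bounds(2)[OF w0, of "u+g0" j] tau_bounds(1)[OF w0, of u j]
        unfolding nu_def by linarith
    qed
    have nusum: "(\<Sum>j<n. nu j) = g0"
      using tsum[of "u+g0"] tsum[of u] u g0nn by (simp add: nu_def sum_subtractf)
    have nurho: "(\<Sum>j<n. nu j * \<rho> j) = s0"
      using u(3) by (simp add: f_def nu_def mult.commute)
    have "\<exists>Hh L. (\<forall>j<n. 0 < nu j \<longrightarrow> L \<le> \<rho> j \<and> \<rho> j \<le> Hh) \<and>
        (\<forall>j<n. nu j < w j \<longrightarrow> Hh \<le> \<rho> j \<or> \<rho> j \<le> L)"
      using window_AP[OF w0 srt, of u g0] unfolding nu_def .
    then obtain Hh L where AP: "\<forall>j<n. 0 < nu j \<longrightarrow> L \<le> \<rho> j \<and> \<rho> j \<le> Hh"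
        "\<forall>j<n. nu j < w j \<longrightarrow> Hh \<le> \<rho> j \<or> \<rho> j \<le> L" by blast
    define w' where "w' = (\<lambda>j. w j - nu j)"
    have prem: "(\<forall>j. 0 \<le> w' j) \<and> (\<Sum>j<n. w' j) = (\<Sum>i\<in>I. g i) \<and> (\<Sum>j<n. w' j * \<rho> j) = (\<Sum>i\<in>I. s i)
     \<and> (\<forall>S\<subseteq>I. \<forall>c. (\<Sum>i\<in>S. s i) \<le> c * (\<Sum>i\<in>S. g i) + (\<Sum>j<n. w' j * max 0 (\<rho> j - c)))"
    proof (intro conjI allI impI)
      fix j show "0 \<le> w' j" using nuw by (simp add: w'_def)
    next
      show "(\<Sum>j<n. w' j) = (\<Sum>i\<in>I. g i)" using W nusum by (simp add: w'_def sum_subtractf GI_def)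
    next
      show "(\<Sum>j<n. w' j * \<rho> j) = (\<Sum>i\<in>I. s i)" using Ms nurho
        by (simp add: w'_def sum_subtractf left_diff_distrib)
    next
      fix S c assume S: "S \<subseteq> I"
      have i0S: "i0 \<notin> S" using S insert.hyps by auto
      have fS: "finite S" using S insert.hyps finite_subset by blast
      show "(\<Sum>i\<in>S. s i) \<le> c * (\<Sum>i\<in>S. g i) + (\<Sum>j<n. w' j * max 0 (\<rho> j - c))"
        unfolding w'_def
      proof (rule verify_rest[where nu=nu and ?g0.0=g0 and ?s0.0=s0 and L=L and H=Hh])
        show "finite {..<n}" by simp
        show "\<forall>j\<in>{..<n}. 0 \<le> nu j" using nu0 by simp
        show "\<forall>j\<in>{..<n}. nu j \<le> w j" using nuw by simp
        show "sum nu {..<n} = g0" using nusum by simp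
        show "(\<Sum>j\<in>{..<n}. nu j * \<rho> j) = s0" using nurho by simp
        show "\<forall>j\<in>{..<n}. 0 < nu j \<longrightarrow> L \<le> \<rho> j \<and> \<rho> j \<le> Hh" using AP by simp
        show "\<forall>j\<in>{..<n}. nu j < w j \<longrightarrow> Hh \<le> \<rho> j \<or> \<rho> j \<le> L" using AP by simp
        show "\<forall>c. sum s S \<le> c * sum g S + (\<Sum>j\<in>{..<n}. w j * max 0 (\<rho> j - c))"
          using C[OF subset_insertI2[OF S]] by blast
        show "\<forall>c. sum s S + s0 \<le> c * (sum g S + g0) + (\<Sum>j\<in>{..<n}. w j * max 0 (\<rho> j - c))"
        proof
          fix c
          have "insert i0 S \<subseteq> insert i0 I" using S by auto
          from C[OF this, of c] show "sum s S + s0 \<le> c * (sum g S + g0) + (\<Sum>j\<in>{..<n}. w j * max 0 (\<rho> j - c))"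
            using i0S fS by (simp add: s0_def g0_def algebra_simps)
        qed
      qed
    qed
    have gI: "\<forall>i\<in>I. 0 \<le> g i" using insert.prems by simp
    obtain M' where M': "\<forall>i\<in>I. \<forall>j<n. 0 \<le> M' i j" "\<forall>i\<in>I. (\<Sum>j<n. M' i j) = g i"
           "\<forall>j<n. (\<Sum>i\<in>I. M' i j) = w' j" "\<forall>i\<in>I. (\<Sum>j<n. M' i j * \<rho> j) = s i"
      using insert.IH[OF gI, rule_format, OF prem] by blast
    define M where "M = (\<lambda>i j. if i = i0 then nu j else M' i j)"
    show "\<exists>M. (\<forall>i\<in>insert i0 I. \<forall>j<n. 0 \<le> M i j) \<and> (\<forall>i\<in>insert i0 I. (\<Sum>j<n. M i j) = g i)
           \<and> (\<forall>j<n. (\<Sum>i\<in>insert i0 I. M i j) = w j) \<and> (\<forall>i\<in>insert i0 I. (\<Sum>j<n. M i j * \<rho> j) = s i)"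
    proof (intro exI[of _ M] conjI ballI allI impI)
      fix i j assume "i \<in> insert i0 I" "j < n"
      then show "0 \<le> M i j" using M'(1) nu0 by (auto simp: M_def)
    next
      fix i assume "i \<in> insert i0 I"
      then show "(\<Sum>j<n. M i j) = g i"
      proof
        assume "i = i0" then show ?thesis using nusum by (simp add: M_def g0_def)
      next
        assume "i \<in> I" then have "i \<noteq> i0" using insert.hyps by auto
        then show ?thesis using M'(2) \<open>i \<in> I\<close> by (simp add: M_def)
      qed
    next
      fix j assume j: "j < n"
      have "(\<Sum>i\<in>insert i0 I. M i j) = nu j + (\<Sum>i\<in>I. M' i j)"
        using insert.hyps by (simp add: M_def) (intro sum.cong, auto)
      then show "(\<Sum>i\<in>insert i0 I. M i j) = w j" using M'(3) j by (simp add: w'_def)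
    next
      fix i assume "i \<in> insert i0 I"
      then show "(\<Sum>j<n. M i j * \<rho> j) = s i"
      proof
        assume "i = i0" then show ?thesis using nurho by (simp add: M_def s0_def)
      next
        assume "i \<in> I" then have "i \<noteq> i0" using insert.hyps by auto
        then show ?thesis using M'(4) \<open>i \<in> I\<close> by (simp add: M_def)
      qed
    qed
  qed
qed



definition Psi :: "nat \<Rightarrow> (nat \<Rightarrow> real) \<Rightarrow> (nat \<Rightarrow> real) \<Rightarrow> real \<Rightarrow> real \<Rightarrow> real" where
  "Psi d g q c x = c * x + (\<Sum>l<d. g l * max 0 (q l / g l - c))"

lemma wd:
  fixes v w \<rho> :: "'a \<Rightarrow> real"
  assumes "finite A" "\<forall>l\<in>A. 0 \<le> v l \<and> v l \<le> w l"
  shows "(\<Sum>l\<in>A. v l * \<rho> l) \<le> c * (\<Sum>l\<in>A. v l) + (\<Sum>l\<in>A. w l * max 0 (\<rho> l - c))"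
proof -
  have "v l * \<rho> l \<le> c * v l + w l * max 0 (\<rho> l - c)" if "l \<in> A" for l
  proof (cases "c \<le> \<rho> l")
    case True
    then have "v l * (\<rho> l - c) \<le> w l * (\<rho> l - c)" using assms(2) that by (intro mult_right_mono) auto
    then show ?thesis using True by (simp add: algebra_simps)
  next
    case False
    then have "v l * (\<rho> l - c) \<le> 0" using assms(2) that by (intro mult_nonneg_nonpos) auto
    then show ?thesis using False by (simp add: algebra_simps)
  qed
  then have "(\<Sum>l\<in>A. v l * \<rho> l) \<le> (\<Sum>l\<in>A. c * v l + w l * max 0 (\<rho> l - c))" by (intro sum_mono)
  then show ?thesis by (simp add: sum.distrib sum_distrib_left)
qed

lemma sum_if1: "k \<le> (d::nat) \<Longrightarrow> (\<Sum>j<d. if j < k then a j else (0::real)) = (\<Sum>j<k. a j)"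
  by (induction d) (auto simp: less_Suc_eq le_Suc_eq)

lemma sum_if2: "k < (d::nat) \<Longrightarrow> (\<Sum>j<d. if j < k then a j else if j = k then b else (0::real)) = (\<Sum>j<k. a j) + b"
proof (induction d)
  case 0 then show ?case by simp
next
  case (Suc d)
  show ?case
  proof (cases "k = d")
    case True
    then show ?thesis using sum_if1[of k k a] by (simp add: sum_if1)
  next
    case False
    then have "k < d" using Suc.prems by simp
    then show ?thesis using Suc.IH by simp
  qed
qed

lemma reindex: "\<pi> permutes {..<d} \<Longrightarrow> (\<Sum>l<d. f l) = (\<Sum>j<d. f (\<pi> j))"
  using sum.permute[of \<pi> "{..<d}" f] by (simp add: comp_def)

lemma perm_lt: "\<pi> permutes {..<d} \<Longrightarrow> j < d \<Longrightarrow> \<pi> j < d"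
  using permutes_in_image by fastforce

lemma cum_Suc: "cum f \<pi> (Suc k) = cum f \<pi> k + f (\<pi> k)"
  by (simp add: cum_def)

lemma easy:
  assumes T: "T \<in> TP d g" and gpos: "\<forall>l<d. 0 < g l" and S: "S \<subseteq> {..<d}"
  shows "(\<Sum>i\<in>S. mat_app d T q i) \<le> Psi d g q c (\<Sum>i\<in>S. g i)"
proof -
  have T0: "\<forall>i<d. \<forall>j<d. 0 \<le> T i j" and Tc: "\<forall>j<d. (\<Sum>i<d. T i j) = 1"
    and Tg: "\<forall>i<d. (\<Sum>j<d. T i j * g j) = g i" using T by (auto simp: TP_def)
  have fS: "finite S" using S finite_subset by blast
  define v where "v = (\<lambda>l. (\<Sum>i\<in>S. T i l) * g l)"
  have "(\<Sum>i\<in>S. mat_app d T q i) = (\<Sum>i\<in>S. \<Sum>l<d. T i l * q l)"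
    using S by (intro sum.cong) (auto simp: mat_app_def)
  also have "\<dots> = (\<Sum>l<d. (\<Sum>i\<in>S. T i l) * q l)"
    by (subst sum.swap) (simp add: sum_distrib_right)
  also have "\<dots> = (\<Sum>l<d. v l * (q l / g l))"
    using gpos by (intro sum.cong) (auto simp: v_def)
  finally have e1: "(\<Sum>i\<in>S. mat_app d T q i) = (\<Sum>l<d. v l * (q l / g l))" .
  have "(\<Sum>i\<in>S. g i) = (\<Sum>i\<in>S. \<Sum>l<d. T i l * g l)"
    using S Tg by (intro sum.cong) auto
  also have "\<dots> = (\<Sum>l<d. v l)" unfolding v_def by (subst sum.swap) (simp add: sum_distrib_right)
  finally have e2: "(\<Sum>i\<in>S. g i) = (\<Sum>l<d. v l)" .
  have vb: "\<forall>l\<in>{..<d}. 0 \<le> v l \<and> v l \<le> g l"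
  proof
    fix l assume l: "l \<in> {..<d}"
    have a: "0 \<le> (\<Sum>i\<in>S. T i l)" using T0 S l by (intro sum_nonneg) auto
    have "(\<Sum>i\<in>S. T i l) \<le> (\<Sum>i<d. T i l)" using T0 S l by (intro sum_mono2) auto
    then have b: "(\<Sum>i\<in>S. T i l) \<le> 1" using Tc l by auto
    have gl: "0 < g l" using gpos l by auto
    show "0 \<le> v l \<and> v l \<le> g l" unfolding v_def using a b gl
      by (auto intro: mult_nonneg_nonneg simp: mult_le_cancel_right1)
  qed
  show ?thesis unfolding e1 e2 Psi_def using wd[OF _ vb, of "\<lambda>l. q l / g l" c] by simp
qed

lemma line_eq:
  assumes tho: "thermo_order d g q \<pi>" and gpos: "\<forall>l<d. 0 < g l" and k: "k < d"
  shows "Psi d g q (q (\<pi> k) / g (\<pi> k)) x = cum q \<pi> k + q (\<pi> k) / g (\<pi> k) * (x - cum g \<pi> k)"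
proof -
  have pm: "\<pi> permutes {..<d}" and srt: "\<forall>i j. i \<le> j \<and> j < d \<longrightarrow> q (\<pi> j) / g (\<pi> j) \<le> q (\<pi> i) / g (\<pi> i)"
    using tho by (auto simp: thermo_order_def)
  define rk where "rk = q (\<pi> k) / g (\<pi> k)"
  have "(\<Sum>l<d. g l * max 0 (q l / g l - rk)) = (\<Sum>j<d. g (\<pi> j) * max 0 (q (\<pi> j) / g (\<pi> j) - rk))"
    using reindex[OF pm] by blast
  also have "\<dots> = (\<Sum>j<d. if j < k then q (\<pi> j) - g (\<pi> j) * rk else 0)"
  proof (intro sum.cong refl)
    fix j assume j: "j \<in> {..<d}"
    have gj: "0 < g (\<pi> j)" using gpos perm_lt[OF pm] j by auto
    show "g (\<pi> j) * max 0 (q (\<pi> j) / g (\<pi> j) - rk) = (if j < k then q (\<pi> j) - g (\<pi> j) * rk else 0)"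
    proof (cases "j < k")
      case True
      then have "rk \<le> q (\<pi> j) / g (\<pi> j)" using srt k by (auto simp: rk_def)
      then show ?thesis using True gj by (simp add: algebra_simps)
    next
      case False
      then have "q (\<pi> j) / g (\<pi> j) \<le> rk" using srt j by (auto simp: rk_def)
      then show ?thesis using False by simp
    qed
  qed
  also have "\<dots> = (\<Sum>j<k. q (\<pi> j) - g (\<pi> j) * rk)" using sum_if1[of k d "\<lambda>j. q (\<pi> j) - g (\<pi> j) * rk"] k by simp
  also have "\<dots> = cum q \<pi> k - rk * cum g \<pi> k"
    by (simp add: cum_def sum_subtractf sum_distrib_left mult.commute)
  finally show ?thesis unfolding Psi_def rk_def[symmetric] by (simp add: algebra_simps)
qed

lemma seg_min:
  assumes tho: "thermo_order d g q \<pi>" and gpos: "\<forall>l<d. 0 < g l" and k: "k < d"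
    and x1: "cum g \<pi> k \<le> x" and x2: "x \<le> cum g \<pi> (Suc k)"
  shows "cum q \<pi> k + q (\<pi> k) / g (\<pi> k) * (x - cum g \<pi> k) \<le> Psi d g q c x"
proof -
  have pm: "\<pi> permutes {..<d}"
    using tho by (auto simp: thermo_order_def)
  define v where "v = (\<lambda>j. if j < k then g (\<pi> j) else if j = k then x - cum g \<pi> k else 0)"
  define \<rho> where "\<rho> = (\<lambda>j. q (\<pi> j) / g (\<pi> j))"
  have vb: "\<forall>j\<in>{..<d}. 0 \<le> v j \<and> v j \<le> g (\<pi> j)"
  proof
    fix j assume j: "j \<in> {..<d}"
    have gj: "0 < g (\<pi> j)" using gpos perm_lt[OF pm] j by auto
    show "0 \<le> v j \<and> v j \<le> g (\<pi> j)" using gj x1 x2 by (auto simp: v_def cum_Suc)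
  qed
  have sv: "(\<Sum>j<d. v j) = x" unfolding v_def using sum_if2[OF k] by (simp add: cum_def)
  have "(\<Sum>j<d. v j * \<rho> j) = (\<Sum>j<d. if j < k then q (\<pi> j) else if j = k then (x - cum g \<pi> k) * \<rho> k else 0)"
  proof (intro sum.cong refl)
    fix j assume j: "j \<in> {..<d}"
    have gj: "0 < g (\<pi> j)" using gpos perm_lt[OF pm] j by auto
    then show "v j * \<rho> j = (if j < k then q (\<pi> j) else if j = k then (x - cum g \<pi> k) * \<rho> k else 0)"
      by (auto simp: v_def \<rho>_def)
  qed
  also have "\<dots> = cum q \<pi> k + q (\<pi> k) / g (\<pi> k) * (x - cum g \<pi> k)"
    using sum_if2[OF k] by (simp add: cum_def \<rho>_def)
  finally have sr: "(\<Sum>j<d. v j * \<rho> j) = cum q \<pi> k + q (\<pi> k) / g (\<pi> k) * (x - cum g \<pi> k)" .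
  have "(\<Sum>j<d. v j * \<rho> j) \<le> c * (\<Sum>j<d. v j) + (\<Sum>j<d. g (\<pi> j) * max 0 (\<rho> j - c))"
    using wd[OF _ vb] by simp
  also have "(\<Sum>j<d. g (\<pi> j) * max 0 (\<rho> j - c)) = (\<Sum>l<d. g l * max 0 (q l / g l - c))"
    using reindex[OF pm, of "\<lambda>l. g l * max 0 (q l / g l - c)"] by (simp add: \<rho>_def)
  finally show ?thesis using sr sv by (simp add: Psi_def)
qed



lemma hard:
  assumes tho: "thermo_order d g p \<pi>" and gpos: "\<forall>l<d. 0 < g l"
    and psum: "(\<Sum>l<d. p l) = 1"
    and xz: "\<forall>i\<ge>d. x i = 0" and xs: "(\<Sum>i<d. x i) = 1" and gs: "(\<Sum>l<d. g l) = 1"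
    and C: "\<forall>S\<subseteq>{..<d}. \<forall>c. (\<Sum>i\<in>S. x i) \<le> Psi d g p c (\<Sum>i\<in>S. g i)"
  shows "x \<in> TP_orbit d g p"
proof -
  have pm: "\<pi> permutes {..<d}" and srt0: "\<forall>i j. i \<le> j \<and> j < d \<longrightarrow> p (\<pi> j) / g (\<pi> j) \<le> p (\<pi> i) / g (\<pi> i)"
    using tho by (auto simp: thermo_order_def)
  define \<rho> where "\<rho> = (\<lambda>j. p (\<pi> j) / g (\<pi> j))"
  define w where "w = (\<lambda>j. if j < d then g (\<pi> j) else 0)"
  have srt: "\<forall>i j. i \<le> j \<and> j < d \<longrightarrow> \<rho> j \<le> \<rho> i" using srt0 by (simp add: \<rho>_def)
  have gI: "\<forall>i\<in>{..<d}. 0 \<le> g i" using gpos by auto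
  have w0: "\<forall>j. 0 \<le> w j" using gpos perm_lt[OF pm] by (auto simp: w_def less_imp_le)
  have ws: "(\<Sum>j<d. w j) = (\<Sum>i\<in>{..<d}. g i)"
    using reindex[OF pm, of g] by (simp add: w_def)
  have wr: "(\<Sum>j<d. w j * \<rho> j) = (\<Sum>i\<in>{..<d}. x i)"
  proof -
    have "(\<Sum>j<d. w j * \<rho> j) = (\<Sum>j<d. p (\<pi> j))"
    proof (intro sum.cong refl)
      fix j assume "j \<in> {..<d}"
      then have "0 < g (\<pi> j)" using gpos perm_lt[OF pm] by auto
      then show "w j * \<rho> j = p (\<pi> j)" using \<open>j \<in> {..<d}\<close> by (simp add: w_def \<rho>_def)
    qed
    also have "\<dots> = 1" using reindex[OF pm, of p] psum by simp
    finally show ?thesis using xs by simp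
  qed
  have psi: "(\<Sum>j<d. w j * max 0 (\<rho> j - c)) = (\<Sum>l<d. g l * max 0 (p l / g l - c))" for c
    using reindex[OF pm, of "\<lambda>l. g l * max 0 (p l / g l - c)"] by (simp add: w_def \<rho>_def)
  have CC: "\<forall>S\<subseteq>{..<d}. \<forall>c. (\<Sum>i\<in>S. x i) \<le> c * (\<Sum>i\<in>S. g i) + (\<Sum>j<d. w j * max 0 (\<rho> j - c))"
    using C unfolding psi by (simp add: Psi_def)
  obtain M where M: "\<forall>i\<in>{..<d}. \<forall>j<d. 0 \<le> M i j" "\<forall>i\<in>{..<d}. (\<Sum>j<d. M i j) = g i"
     "\<forall>j<d. (\<Sum>i\<in>{..<d}. M i j) = w j" "\<forall>i\<in>{..<d}. (\<Sum>j<d. M i j * \<rho> j) = x i"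
    using transport[OF _ srt gI, rule_format, of w x] w0 ws wr CC by blast
  define T where "T = (\<lambda>i l. M i (inv \<pi> l) / g l)"
  have invl: "inv \<pi> l < d" if "l < d" for l using perm_lt[OF permutes_inv[OF pm]] that by blast
  have pinv: "\<pi> (inv \<pi> l) = l" for l using permutes_inverses(1)[OF pm] by blast
  have invp: "inv \<pi> (\<pi> j) = j" for j using permutes_inverses(2)[OF pm] by blast
  have TP: "T \<in> TP d g"
    unfolding TP_def
  proof (intro CollectI conjI allI impI)
    fix i j assume "i < d" "j < d"
    then show "0 \<le> T i j" using M(1) invl gpos by (auto simp: T_def less_imp_le)
  next
    fix l assume l: "l < d"
    have "(\<Sum>i<d. T i l) = (\<Sum>i<d. M i (inv \<pi> l)) / g l" by (simp add: T_def sum_divide_distrib)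
    also have "\<dots> = w (inv \<pi> l) / g l" using M(3) invl[OF l] by simp
    also have "\<dots> = 1" using invl[OF l] pinv gpos l by (simp add: w_def less_imp_neq[symmetric])
    finally show "(\<Sum>i<d. T i l) = 1" .
  next
    fix i assume i: "i < d"
    have "(\<Sum>l<d. T i l * g l) = (\<Sum>l<d. M i (inv \<pi> l))" using gpos by (intro sum.cong) (auto simp: T_def)
    also have "\<dots> = (\<Sum>j<d. M i j)" using reindex[OF pm, of "\<lambda>l. M i (inv \<pi> l)"] invp by simp
    also have "\<dots> = g i" using M(2) i by simp
    finally show "(\<Sum>l<d. T i l * g l) = g i" .
  qed
  have "mat_app d T p = x"
  proof
    fix i show "mat_app d T p i = x i"
    proof (cases "i < d")
      case False then show ?thesis using xz by (simp add: mat_app_def)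
    next
      case True
      have "(\<Sum>l<d. T i l * p l) = (\<Sum>j<d. T i (\<pi> j) * p (\<pi> j))" using reindex[OF pm] by blast
      also have "\<dots> = (\<Sum>j<d. M i j * \<rho> j)" by (intro sum.cong) (auto simp: T_def invp \<rho>_def)
      also have "\<dots> = x i" using M(4) True by simp
      finally show ?thesis using True by (simp add: mat_app_def)
    qed
  qed
  then show ?thesis using TP unfolding TP_orbit_def by blast
qed



lemma seg_exists:
  assumes pm: "\<pi> permutes {..<d}" and gpos: "\<forall>l<d. 0 < g l" and gs: "(\<Sum>l<d. g l) = 1"
    and x: "0 \<le> x" "x \<le> 1" and d: "0 < d"
  shows "\<exists>k<d. cum g \<pi> k \<le> x \<and> x \<le> cum g \<pi> (Suc k)"
proof -
  define K where "K = {k. k < d \<and> cum g \<pi> k \<le> x}"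
  have fK: "finite K" by (simp add: K_def)
  have 0: "0 \<in> K" using d x by (simp add: K_def cum_def)
  define k where "k = Max K"
  have kK: "k \<in> K" using Max_in[OF fK] 0 by (auto simp: k_def)
  have kmax: "j \<in> K \<Longrightarrow> j \<le> k" for j using Max_ge[OF fK] by (simp add: k_def)
  have "x \<le> cum g \<pi> (Suc k)"
  proof (cases "Suc k < d")
    case True
    then have "Suc k \<notin> K" using kmax by force
    then show ?thesis using True by (simp add: K_def)
  next
    case False
    then have "Suc k = d" using kK by (simp add: K_def)
    then have "cum g \<pi> (Suc k) = 1" using reindex[OF pm, of g] gs by (simp add: cum_def)
    then show ?thesis using x by simp
  qed
  then show ?thesis using kK by (auto simp: K_def)
qed

lemma cum_img:
  assumes pm: "\<pi> permutes {..<d}"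
  shows "cum f \<pi> j = sum f (\<pi> ` {..<j})"
proof -
  have "inj_on \<pi> {..<j}" using permutes_inj[OF pm] by (simp add: inj_on_def inj_def)
  then show ?thesis by (simp add: cum_def sum.reindex)
qed

lemma img_sub:
  fixes \<pi> :: "nat \<Rightarrow> nat"
  assumes pm: "\<pi> permutes {..<d}" and "j \<le> d"
  shows "\<pi> ` {..<j} \<subseteq> {..<d}"
proof
  fix y assume "y \<in> \<pi> ` {..<j}"
  then obtain i where "i < j" "y = \<pi> i" by auto
  then have "i < d" using assms(2) by linarith
  then show "y \<in> {..<d}" using perm_lt[OF pm, of i] \<open>y = \<pi> i\<close> by simp
qed

lemma finite_min:
  assumes "finite F" "\<forall>S\<in>F. \<exists>\<eta>>0. \<forall>c. f S + \<eta> \<le> (h S c::real)"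
  shows "\<exists>\<eta>>0. \<forall>S\<in>F. \<forall>c. f S + \<eta> \<le> h S c"
  using assms
proof (induction F rule: finite_induct)
  case empty then show ?case by (intro exI[of _ 1]) auto
next
  case (insert S0 F)
  obtain e1 where e1: "e1 > 0" "\<forall>c. f S0 + e1 \<le> h S0 c" using insert.prems by auto
  obtain e2 where e2: "e2 > 0" "\<forall>S\<in>F. \<forall>c. f S + e2 \<le> h S c" using insert.IH insert.prems by auto
  show ?case
  proof (intro exI[of _ "min e1 e2"] conjI ballI allI)
    show "0 < min e1 e2" using e1 e2 by simp
  next
    fix S c assume "S \<in> insert S0 F"
    then show "f S + min e1 e2 \<le> h S c"
    proof
      assume "S = S0"
      have "f S0 + min e1 e2 \<le> f S0 + e1" by simp
      also have "\<dots> \<le> h S0 c" using e1(2) by blast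
      finally show ?thesis using \<open>S = S0\<close> by simp
    next
      assume "S \<in> F"
      have "f S + min e1 e2 \<le> f S + e2" by simp
      also have "\<dots> \<le> h S c" using e2(2) \<open>S \<in> F\<close> by blast
      finally show ?thesis .
    qed
  qed
qed

lemma delta_sum: "(\<Sum>j<(d::nat). (if i = j then 1 else 0) * (f j::real)) = (if i < d then f i else 0)"
proof -
  have "(\<Sum>j<d. (if i = j then 1 else 0) * (f j::real)) = (\<Sum>j<d. if i = j then f j else 0)"
    by (intro sum.cong) auto
  also have "\<dots> = (if i < d then f i else 0)" by (induction d) auto
  finally show ?thesis .
qed

lemma delta_sum2: "(\<Sum>i<(d::nat). (if i = j then 1 else 0::real)) = (if j < d then 1 else 0)"
  by (induction d) auto

lemma id_TP:
  shows "(\<lambda>i j. if i = j then 1 else 0) \<in> TP d g"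
  unfolding TP_def by (auto simp: delta_sum delta_sum2)

lemma mat_app_id:
  assumes "\<forall>i\<ge>d. r i = 0"
  shows "mat_app d (\<lambda>i j. if i = j then 1 else 0) r = r"
proof
  fix i show "mat_app d (\<lambda>i j. if i = j then 1 else 0) r i = r i"
    using assms by (auto simp: mat_app_def delta_sum)
qed

lemma easy_self:
  assumes gpos: "\<forall>l<d. 0 < g l" and S: "S \<subseteq> {..<d}" and rz: "\<forall>i\<ge>d. r i = 0"
  shows "(\<Sum>i\<in>S. r i) \<le> Psi d g r c (\<Sum>i\<in>S. g i)"
  using easy[OF id_TP gpos S, of r c] mat_app_id[OF rz] by simp



theorem mainTheorem4:
  fixes d :: nat and \<beta> :: real and E :: "nat \<Rightarrow> real"
    and p r :: "nat \<Rightarrow> real" and \<pi>p \<pi>r :: "nat \<Rightarrow> nat"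
  assumes "d \<ge> 2" and "\<beta> > 0"
    and "E 0 = 0" and "inj_on E {..<d}"
    and "is_state d p"
    and "r \<in> TP_orbit d (gibbs d \<beta> E) p"
    and "thermo_order d (gibbs d \<beta> E) p \<pi>p"
    and "thermo_order d (gibbs d \<beta> E) r \<pi>r"
  shows "r \<in> (subtopology euclidean (hyperplane1 d)) frontier_of (TP_orbit d (gibbs d \<beta> E) p)
     \<longleftrightarrow> elbow_on_curve d (gibbs d \<beta> E) r \<pi>r p \<pi>p"
proof -
  define g where "g = gibbs d \<beta> E"
  have d2: "2 \<le> d" and d0: "0 < d" using assms(1) by auto
  have Zpos: "0 < Zf d \<beta> E" unfolding Zf_def qf_def using d0 by (intro sum_pos) auto
  have gpos: "\<forall>l<d. 0 < g l" using Zpos by (simp add: g_def gibbs_def qf_def)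
  have gs: "(\<Sum>l<d. g l) = 1" using Zpos by (simp add: g_def gibbs_def sum_divide_distrib[symmetric] Zf_def)
  obtain T0 where T0: "T0 \<in> TP d g" "r = mat_app d T0 p" using assms(6) by (auto simp: TP_orbit_def g_def)
  have pz: "\<forall>i\<ge>d. p i = 0" and psum: "(\<Sum>i<d. p i) = 1" using assms(5) by (auto simp: is_state_def)
  have rz: "\<forall>i\<ge>d. r i = 0" using T0(2) by (simp add: mat_app_def)
  have rsum: "(\<Sum>i<d. r i) = 1"
  proof -
    have "(\<Sum>i<d. r i) \<le> Psi d g p 0 (\<Sum>i<d. g i)" using easy[OF T0(1) gpos, of "{..<d}" p 0] T0(2) by simp
    have "(\<Sum>i<d. r i) = (\<Sum>i<d. \<Sum>j<d. T0 i j * p j)" using T0(2) by (simp add: mat_app_def)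
    also have "\<dots> = (\<Sum>j<d. (\<Sum>i<d. T0 i j) * p j)" by (subst sum.swap) (simp add: sum_distrib_right)
    also have "\<dots> = (\<Sum>j<d. p j)" using T0(1) by (intro sum.cong) (auto simp: TP_def)
    finally show ?thesis using psum by simp
  qed
  have rH: "r \<in> hyperplane1 d" using rz rsum by (simp add: hyperplane1_def)
  have thp: "thermo_order d g p \<pi>p" and thr: "thermo_order d g r \<pi>r" using assms(7,8) by (simp_all add: g_def)
  have pmp: "\<pi>p permutes {..<d}" and pmr: "\<pi>r permutes {..<d}" using thp thr by (auto simp: thermo_order_def)
  define X where "X = subtopology euclidean (hyperplane1 d)"
  define A where "A = TP_orbit d g p"
  have topX: "topspace X = hyperplane1 d" by (simp add: X_def)
  have rA: "r \<in> A" using assms(6) by (simp add: A_def g_def)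
  have clos: "r \<in> X closure_of A"
  proof -
    have "{r} \<subseteq> X closure_of {r}" using rH topX by (intro closure_of_subset) auto
    also have "\<dots> \<subseteq> X closure_of A" using rA by (intro closure_of_mono) auto
    finally show ?thesis by simp
  qed
  define Lp where "Lp = (\<lambda>k x. cum p \<pi>p k + p (\<pi>p k) / g (\<pi>p k) * (x - cum g \<pi>p k))"
  have onc: "on_curve d g p \<pi>p x y \<longleftrightarrow> (\<exists>k<d. cum g \<pi>p k \<le> x \<and> x \<le> cum g \<pi>p (Suc k) \<and> y = Lp k x)" for x y
    by (simp add: on_curve_def Lp_def cum_Suc)
  have lineP: "Psi d g p (p (\<pi>p k) / g (\<pi>p k)) x = Lp k x" if "k < d" for k x
    using line_eq[OF thp gpos that] by (simp add: Lp_def)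
  have segP: "Lp k x \<le> Psi d g p c x" if "k < d" "cum g \<pi>p k \<le> x" "x \<le> cum g \<pi>p (Suc k)" for k x c
    using seg_min[OF thp gpos that] by (simp add: Lp_def)
  have easyP: "(\<Sum>i\<in>S. r i) \<le> Psi d g p c (\<Sum>i\<in>S. g i)" if "S \<subseteq> {..<d}" for S c
    using easy[OF T0(1) gpos that, of p c] T0(2) by simp
  have cum01: "0 \<le> cum g \<pi> j" "cum g \<pi> j \<le> 1" if "\<pi> permutes {..<d}" "j \<le> d" for \<pi> j
  proof -
    have "cum g \<pi> j = sum g (\<pi> ` {..<j})" using cum_img[OF that(1)] by simp
    moreover have "\<pi> ` {..<j} \<subseteq> {..<d}" using img_sub[OF that] .
    moreover have "0 \<le> sum g (\<pi> ` {..<j})" using gpos \<open>\<pi> ` {..<j} \<subseteq> {..<d}\<close>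
      by (intro sum_nonneg) (auto simp: less_imp_le)
    moreover have "sum g (\<pi> ` {..<j}) \<le> (\<Sum>l<d. g l)" using gpos \<open>\<pi> ` {..<j} \<subseteq> {..<d}\<close>
      by (intro sum_mono2) (auto simp: less_imp_le)
    ultimately show "0 \<le> cum g \<pi> j" "cum g \<pi> j \<le> 1" using gs by auto
  qed
  have touch: "elbow_on_curve d g r \<pi>r p \<pi>p"
    if j: "1 \<le> j" "j < d" and m: "m < d" and eq: "cum r \<pi>r j = Lp m (cum g \<pi>r j)" for j m
  proof -
    define Gj where "Gj = cum g \<pi>r j"
    have G01: "0 \<le> Gj" "Gj \<le> 1" using cum01[OF pmr, of j] j by (auto simp: Gj_def)
    obtain m' where m': "m' < d" "cum g \<pi>p m' \<le> Gj" "Gj \<le> cum g \<pi>p (Suc m')"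
      using seg_exists[OF pmp gpos gs G01 d0] by blast
    have sub: "\<pi>r ` {..<j} \<subseteq> {..<d}" using img_sub[OF pmr] j by simp
    have "cum r \<pi>r j \<le> Lp m' Gj"
      using easyP[OF sub, of "p (\<pi>p m') / g (\<pi>p m')"] lineP[OF m'(1)] cum_img[OF pmr, of r j] cum_img[OF pmr, of g j]
      by (simp add: Gj_def)
    moreover have "Lp m' Gj \<le> Lp m Gj"
      using segP[OF m', of "p (\<pi>p m) / g (\<pi>p m)"] lineP[OF m] by simp
    ultimately have "cum r \<pi>r j = Lp m' Gj" using eq by (simp add: Gj_def)
    then have "on_curve d g p \<pi>p (cum g \<pi>r j) (cum r \<pi>r j)" using onc m' by (auto simp: Gj_def)
    then show ?thesis unfolding elbow_on_curve_def using j
      by (intro exI[of _ "j - 1"]) auto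
  qed
  have partA: "r \<notin> X interior_of A" if el: "elbow_on_curve d g r \<pi>r p \<pi>p"
  proof
    assume rint: "r \<in> X interior_of A"
    obtain e where e: "e + 2 \<le> d" "on_curve d g p \<pi>p (cum g \<pi>r (Suc e)) (cum r \<pi>r (Suc e))"
      using el by (auto simp: elbow_on_curve_def)
    obtain m where m: "m < d" "cum r \<pi>r (Suc e) = Lp m (cum g \<pi>r (Suc e))"
      using e(2) onc by blast
    define S where "S = \<pi>r ` {..<Suc e}"
    have Ssub: "S \<subseteq> {..<d}" unfolding S_def using img_sub[OF pmr] e(1) by simp
    have fS: "finite S" by (simp add: S_def)
    have GS: "cum g \<pi>r (Suc e) = sum g S" and RS: "cum r \<pi>r (Suc e) = sum r S"
      using cum_img[OF pmr] by (simp_all add: S_def)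
    define a where "a = \<pi>r 0"
    define b where "b = \<pi>r (d - 1)"
    have injr: "inj \<pi>r" using permutes_inj[OF pmr] .
    have aS: "a \<in> S" by (simp add: a_def S_def)
    have bS: "b \<notin> S"
    proof
      assume "b \<in> S"
      then obtain i where "i < Suc e" "\<pi>r (d - 1) = \<pi>r i" by (auto simp: S_def b_def)
      then have "d - 1 = i" using injr by (auto dest: injD)
      then show False using \<open>i < Suc e\<close> e(1) by simp
    qed
    have ad: "a < d" and bd: "b < d" using perm_lt[OF pmr] d0 by (auto simp: a_def b_def)
    have ab: "a \<noteq> b" using aS bS by auto
    obtain U where U: "openin X U" "r \<in> U" "U \<subseteq> A" using rint by (auto simp: interior_of_def)
    obtain V where V: "open V" "U = hyperplane1 d \<inter> V" using U(1) by (auto simp: X_def openin_open)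
    define c where "c = (\<lambda>i. (if i = a then 1 else 0) - (if i = b then 1 else (0::real)))"
    define f where "f = (\<lambda>t::real. \<lambda>i. r i + t * c i)"
    have contf: "continuous_on UNIV f" unfolding f_def
      by (intro continuous_on_coordinatewise_then_product continuous_intros)
    have ov: "open (f -` V)" using open_vimage[OF V(1) contf] .
    have "0 \<in> f -` V" using U(2) V(2) by (simp add: f_def)
    then obtain eps where eps: "eps > 0" "ball 0 eps \<subseteq> f -` V"
      using ov open_contains_ball by blast
    define t where "t = eps / 2"
    have t0: "0 < t" using eps by (simp add: t_def)
    have "t \<in> ball 0 eps" using eps by (simp add: t_def)
    then have ftV: "f t \<in> V" using eps by auto
    have csum: "(\<Sum>i<d. c i) = 0"
      using delta_sum2[of d a] delta_sum2[of d b] ad bd by (simp add: c_def sum_subtractf)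
    have cS: "(\<Sum>i\<in>S. c i) = 1"
    proof -
      have "(\<Sum>i\<in>S. (if i = a then 1 else 0::real)) = 1" using fS aS by (subst sum.delta) auto
      moreover have "(\<Sum>i\<in>S. (if i = b then 1 else 0::real)) = 0" using fS bS by (subst sum.delta) auto
      ultimately show ?thesis by (simp add: c_def sum_subtractf)
    qed
    have ftH: "f t \<in> hyperplane1 d"
    proof -
      have "\<forall>i\<ge>d. f t i = 0" using rz ad bd by (auto simp: f_def c_def)
      moreover have "(\<Sum>i<d. f t i) = 1" using rsum csum by (simp add: f_def sum.distrib sum_distrib_left[symmetric])
      ultimately show ?thesis by (simp add: hyperplane1_def)
    qed
    have "f t \<in> A" using ftV ftH U(3) V(2) by auto
    then obtain T where T: "T \<in> TP d g" "f t = mat_app d T p" by (auto simp: A_def TP_orbit_def)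
    have "(\<Sum>i\<in>S. f t i) \<le> Psi d g p (p (\<pi>p m) / g (\<pi>p m)) (\<Sum>i\<in>S. g i)"
      using easy[OF T(1) gpos Ssub, of p] T(2) by simp
    also have "\<dots> = sum r S" using lineP[OF m(1)] m(2) GS RS by simp
    finally have le: "(\<Sum>i\<in>S. f t i) \<le> sum r S" .
    have "(\<Sum>i\<in>S. f t i) = sum r S + t" using cS by (simp add: f_def sum.distrib sum_distrib_left[symmetric])
    then show False using le t0 by simp
  qed
  have partB: "r \<in> X interior_of A" if nel: "\<not> elbow_on_curve d g r \<pi>r p \<pi>p"
  proof -
    define F where "F = {S. S \<subseteq> {..<d} \<and> S \<noteq> {} \<and> S \<noteq> {..<d}}"
    have fF: "finite F" by (rule finite_subset[of F "Pow {..<d}"]) (auto simp: F_def)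
    have slack: "\<forall>S\<in>F. \<exists>\<eta>>0. \<forall>c. sum r S + \<eta> \<le> Psi d g p c (sum g S)"
    proof
      fix S assume SF: "S \<in> F"
      have Ssub: "S \<subseteq> {..<d}" and Sne: "S \<noteq> {}" and Snf: "S \<noteq> {..<d}" using SF by (auto simp: F_def)
      have fS: "finite S" using Ssub finite_subset by blast
      define x where "x = sum g S"
      have xpos: "0 < x"
      proof -
        obtain i where "i \<in> S" using Sne by auto
        then show ?thesis unfolding x_def using fS gpos Ssub
          by (intro sum_pos2[of S i]) (auto simp: less_imp_le)
      qed
      have xlt: "x < 1"
      proof -
        obtain i where i: "i \<in> {..<d} - S" using Ssub Snf by auto
        have "0 < sum g ({..<d} - S)" using i gpos by (intro sum_pos2[of _ i]) (auto simp: less_imp_le)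
        moreover have "sum g ({..<d} - S) = sum g {..<d} - sum g S" using Ssub by (simp add: sum_diff)
        ultimately show ?thesis using gs by (simp add: x_def)
      qed
      obtain m where m: "m < d" "cum g \<pi>p m \<le> x" "x \<le> cum g \<pi>p (Suc m)"
        using seg_exists[OF pmp gpos gs _ _ d0, of x] xpos xlt by auto
      have le: "sum r S \<le> Lp m x" using easyP[OF Ssub, of "p (\<pi>p m) / g (\<pi>p m)"] lineP[OF m(1)] by (simp add: x_def)
      have lt: "sum r S < Lp m x"
      proof (rule ccontr)
        assume "\<not> sum r S < Lp m x"
        then have eqS: "sum r S = Lp m x" using le by simp
        obtain k where k: "k < d" "cum g \<pi>r k \<le> x" "x \<le> cum g \<pi>r (Suc k)"
          using seg_exists[OF pmr gpos gs _ _ d0, of x] xpos xlt by auto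
        define Gk where "Gk = cum g \<pi>r k"
        define Rk where "Rk = cum r \<pi>r k"
        define gk where "gk = g (\<pi>r k)"
        define rk where "rk = r (\<pi>r k)"
        define a where "a = x - Gk"
        define b where "b = Gk + gk - x"
        have gkpos: "0 < gk" using gpos perm_lt[OF pmr k(1)] by (simp add: gk_def)
        have a0: "0 \<le> a" and b0: "0 \<le> b" using k by (auto simp: a_def b_def Gk_def gk_def cum_Suc)
        have ab: "a + b = gk" by (simp add: a_def b_def)
        have rS: "sum r S \<le> Rk + rk / gk * a"
          using easy_self[OF gpos Ssub rz, of "r (\<pi>r k) / g (\<pi>r k)"] line_eq[OF thr gpos k(1), of x]
          by (simp add: Rk_def rk_def gk_def a_def Gk_def x_def)
        have subk: "\<pi>r ` {..<k} \<subseteq> {..<d}" using img_sub[OF pmr] k by simp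
        have subk1: "\<pi>r ` {..<Suc k} \<subseteq> {..<d}" using img_sub[OF pmr] k by simp
        have hk: "Rk \<le> Lp m Gk"
          using easyP[OF subk, of "p (\<pi>p m) / g (\<pi>p m)"] lineP[OF m(1)] cum_img[OF pmr, of r k] cum_img[OF pmr, of g k]
          by (simp add: Rk_def Gk_def)
        have hk1: "Rk + rk \<le> Lp m (Gk + gk)"
          using easyP[OF subk1, of "p (\<pi>p m) / g (\<pi>p m)"] lineP[OF m(1)] cum_img[OF pmr, of r "Suc k"] cum_img[OF pmr, of g "Suc k"]
          by (simp add: Rk_def Gk_def rk_def gk_def cum_Suc)
        have e1: "gk * (Rk + rk / gk * a) = b * Rk + a * (Rk + rk)"
        proof -
          have "gk * (Rk + rk / gk * a) = gk * Rk + rk * a" using gkpos by (simp add: field_simps)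
          also have "\<dots> = b * Rk + a * (Rk + rk)" unfolding ab[symmetric] by (simp add: algebra_simps)
          finally show ?thesis .
        qed
        have e2: "gk * Lp m x = b * Lp m Gk + a * Lp m (Gk + gk)"
        proof -
          have aff: "gk * (C + B * (x - D)) = b * (C + B * (Gk - D)) + a * (C + B * (Gk + gk - D))" for C B D
            unfolding a_def b_def by (simp add: algebra_simps)
          show ?thesis unfolding Lp_def by (rule aff)
        qed
        have "gk * Lp m x \<le> gk * (Rk + rk / gk * a)" using eqS rS gkpos by (intro mult_left_mono) auto
        then have key: "b * (Lp m Gk - Rk) + a * (Lp m (Gk + gk) - (Rk + rk)) \<le> 0"
          using e1 e2 by (simp add: algebra_simps)
        have t1: "0 \<le> b * (Lp m Gk - Rk)" using b0 hk by simp
        have t2: "0 \<le> a * (Lp m (Gk + gk) - (Rk + rk))" using a0 hk1 by simp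
        have z1: "b * (Lp m Gk - Rk) = 0" and z2: "a * (Lp m (Gk + gk) - (Rk + rk)) = 0"
          using key t1 t2 by linarith+
        have cumd: "cum g \<pi>r d = 1" using reindex[OF pmr, of g] gs by (simp add: cum_def)
        show False
        proof (cases "0 < a \<and> Suc k < d")
          case True
          then have "Rk + rk = Lp m (Gk + gk)" using z2 by simp
          then have "cum r \<pi>r (Suc k) = Lp m (cum g \<pi>r (Suc k))" by (simp add: Rk_def rk_def Gk_def gk_def cum_Suc)
          then show False using touch[of "Suc k" m] True m(1) nel by simp
        next
          case nA: False
          show False
          proof (cases "0 < b \<and> 1 \<le> k")
            case True
            then have "Rk = Lp m Gk" using z1 by simp
            then show False using touch[of k m] True m(1) k(1) nel by (simp add: Rk_def Gk_def)
          next
            case False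
            have "k = 0 \<longrightarrow> Gk = 0" by (simp add: Gk_def cum_def)
            moreover have "Suc k = d \<longrightarrow> Gk + gk = 1" using cumd by (auto simp: Gk_def gk_def cum_Suc)
            ultimately show False using nA False a0 b0 ab gkpos d2 xpos xlt k(1)
              unfolding a_def b_def by auto
          qed
        qed
      qed
      show "\<exists>\<eta>>0. \<forall>c. sum r S + \<eta> \<le> Psi d g p c (sum g S)"
      proof (intro exI[of _ "Lp m x - sum r S"] conjI allI)
        show "0 < Lp m x - sum r S" using lt by simp
      next
        fix c show "sum r S + (Lp m x - sum r S) \<le> Psi d g p c (sum g S)"
          using segP[OF m, of c] by (simp add: x_def)
      qed
    qed
    obtain eta where eta: "eta > 0" "\<forall>S\<in>F. \<forall>c. sum r S + eta \<le> Psi d g p c (sum g S)"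
      using finite_min[OF fF, of "\<lambda>S. sum r S" "\<lambda>S c. Psi d g p c (sum g S)"] slack by blast
    define del where "del = eta / d"
    have del0: "0 < del" using eta d0 by (simp add: del_def)
    define V where "V = (\<Inter>i\<in>{..<d}. {y::nat\<Rightarrow>real. \<bar>y i - r i\<bar> < del})"
    have oV: "open V" unfolding V_def
    proof (intro open_INT ballI)
      fix i show "open {y::nat\<Rightarrow>real. \<bar>y i - r i\<bar> < del}"
        by (intro open_Collect_less continuous_on_rabs continuous_on_diff continuous_on_product_coordinates continuous_on_const)
    qed simp
    define U where "U = hyperplane1 d \<inter> V"
    have oU: "openin X U" unfolding X_def U_def openin_open using oV by blast
    have rU: "r \<in> U" using rH del0 by (simp add: U_def V_def)
    have UA: "U \<subseteq> A"
    proof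
      fix y assume yU: "y \<in> U"
      have yz: "\<forall>i\<ge>d. y i = 0" and ys: "(\<Sum>i<d. y i) = 1" using yU by (auto simp: U_def hyperplane1_def)
      have yc: "\<bar>y i - r i\<bar> < del" if "i < d" for i using yU that by (auto simp: U_def V_def)
      have C: "\<forall>S\<subseteq>{..<d}. \<forall>c. (\<Sum>i\<in>S. y i) \<le> Psi d g p c (\<Sum>i\<in>S. g i)"
      proof (intro allI impI)
        fix S c assume Ssub: "S \<subseteq> {..<d}"
        show "(\<Sum>i\<in>S. y i) \<le> Psi d g p c (\<Sum>i\<in>S. g i)"
        proof (cases "S = {}")
          case True
          have "0 \<le> (\<Sum>l<d. g l * max 0 (p l / g l - c))" using gpos by (intro sum_nonneg) (auto simp: less_imp_le)
          then show ?thesis using True by (simp add: Psi_def)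
        next
          case Sne: False
          show ?thesis
          proof (cases "S = {..<d}")
            case True
            then show ?thesis using easy_self[OF gpos _ pz, of "{..<d}" c] ys psum by simp
          next
            case False
            then have SF: "S \<in> F" using Sne Ssub by (simp add: F_def)
            have fS: "finite S" using Ssub finite_subset by blast
            have "(\<Sum>i\<in>S. y i) - (\<Sum>i\<in>S. r i) = (\<Sum>i\<in>S. y i - r i)" by (simp add: sum_subtractf)
            also have "\<dots> \<le> (\<Sum>i\<in>S. del)" using yc Ssub by (intro sum_mono) (force simp: abs_le_iff)
            also have "\<dots> = card S * del" by simp
            also have "\<dots> \<le> d * del"
            proof -
              have "card S \<le> card {..<d}" using Ssub by (intro card_mono) auto
              then show ?thesis using del0 by (simp add: mult_right_mono)
            qed
            also have "\<dots> = eta" using d0 by (simp add: del_def)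
            finally have "(\<Sum>i\<in>S. y i) \<le> (\<Sum>i\<in>S. r i) + eta" by simp
            also have "\<dots> \<le> Psi d g p c (\<Sum>i\<in>S. g i)" using eta(2) SF by blast
            finally show ?thesis .
          qed
        qed
      qed
      show "y \<in> A" using hard[OF thp gpos psum yz ys gs C] by (simp add: A_def)
    qed
    show ?thesis unfolding interior_of_def using oU rU UA by blast
  qed
  have "r \<in> X frontier_of A \<longleftrightarrow> elbow_on_curve d g r \<pi>r p \<pi>p"
    using partA partB clos by (auto simp: frontier_of_def)
  then show ?thesis by (simp add: X_def A_def g_def)
qed

end
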